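(* Let $1\le l\le r$ and consider a canonical noiseless MMV model $B=AX$ in which $A$ satisfies $0\le\delta^L_{2k-r+l}(A)<1$ and the nonzero rows of $X$ are in general position. Let $I\subset\{1,\dots,n\}$ satisfy $|I|\le\min(2(k-r)+l,\,k)$ and $|I\setminus\operatorname{supp}X|\le k-r+l$. If $|I\cap\operatorname{supp}X|=k-r+q$ for some integer $q\ge0$, then $$\operatorname{rank}[A_I~B]=|I|+r-q.$$
   Context: Canonical MMV setting: $m,n,r,k$ are positive integers with $r\le m<n$ and $r\le k$. $A\in\mathbb{R}^{m\times n}$ is the sensing matrix with columns $\mathbf a_1,\dots,\mathbf a_n$; $X\in\mathbb{R}^{n\times r}$ has rows $\mathbf x^1,\dots,\mathbf x^n$, $\operatorname{supp}X=\{i:\mathbf x^i\neq 0\}$ and $|\operatorname{supp}X|=k$; $B=AX\in\mathbb{R}^{m\times r}$ has full column rank $r$. For an index set $I$, $A_I$ is the submatrix of $A$ formed by the columns indexed by $I$, and $[A_I~B]$ denotes horizontal concatenation. The lower restricted isometry constant $\delta^L_s(A)$ is the smallest $\delta\ge0$ such that $(1-\delta)\|\mathbf x\|_2^2\le\|A\mathbf x\|_2^2$ for all $\mathbf x$ with at most $s$ nonzero entries. "The nonzero rows of $X$ are in general position" means any $r$ of the $k$ nonzero rows of $X$ are linearly independent. *)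

theory Defs
  imports "HOL-Analysis.Analysis"
begin

text \<open>Row support of a matrix X (rows indexed by 'n).\<close>
definition row_supp :: "real^'r^'n \<Rightarrow> 'n set" where
  "row_supp X = {i. row i X \<noteq> 0}"

text \<open>Lower restricted isometry constant of order s.\<close>
definition lower_ric :: "nat \<Rightarrow> real^'n^'m \<Rightarrow> real" where
  "lower_ric s A = Inf {\<delta>. \<delta> \<ge> 0 \<and>
     (\<forall>x::real^'n. card {i. x $ i \<noteq> 0} \<le> s \<longrightarrow>
        (1 - \<delta>) * (norm x)^2 \<le> (norm (A *v x))^2)}"

text \<open>Rank of the concatenated matrix [A_I B]: dimension of its column space,
  i.e. of the span of the columns a_i (i in I) together with the columns of B.\<close>
definition rank_concat :: "real^'n^'m \<Rightarrow> 'n set \<Rightarrow> real^'r^'m \<Rightarrow> nat" where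
  "rank_concat A I B = dim ((\<lambda>i. column i A) ` I \<union> columns B)"

text \<open>Nonzero rows of X in general position: any r of them are linearly independent
  (as a family, hence in particular pairwise distinct).\<close>
definition rows_general_position :: "nat \<Rightarrow> real^'r^'n \<Rightarrow> bool" where
  "rows_general_position r X \<longleftrightarrow>
     (\<forall>S \<subseteq> row_supp X. card S = r \<longrightarrow>
        inj_on (\<lambda>i. row i X) S \<and> independent ((\<lambda>i. row i X) ` S))"

end

theory Submission
  imports Defs
begin

lemma ric_injective:
  fixes A :: "real^'n^'m"
  assumes "lower_ric s A < 1" and "card {i. v $ i \<noteq> 0} \<le> s" and "A *v v = 0"
  shows "v = 0"
proof -
  let ?D = "{\<delta>. \<delta> \<ge> 0 \<and>
     (\<forall>x::real^'n. card {i. x $ i \<noteq> 0} \<le> s \<longrightarrow>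
        (1 - \<delta>) * (norm x)^2 \<le> (norm (A *v x))^2)}"
  have "1 \<in> ?D" by simp
  then obtain d where d: "d \<in> ?D" "d < 1"
    using cInf_lessD[of ?D 1] assms(1) unfolding lower_ric_def by blast
  then have "(1 - d) * (norm v)^2 \<le> 0" using assms by auto
  moreover have "1 - d > 0" using d by simp
  ultimately have "(norm v)^2 \<le> 0"
    by (simp add: mult_le_0_iff)
  then show ?thesis by simp
qed

theorem corollary2:
  fixes A :: "real^'n^'m" and X :: "real^'r^'n" and B :: "real^'r^'m"
    and k l q :: nat and I :: "'n set"
  assumes rm: "CARD('r) \<le> CARD('m)" and mn: "CARD('m) < CARD('n)"
    and rk: "CARD('r) \<le> k"
    and suppX: "card (row_supp X) = k"
    and BAX: "B = A ** X"
    and Brank: "rank B = CARD('r)"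
    and l1: "1 \<le> l" and lr: "l \<le> CARD('r)"
    and ric0: "0 \<le> lower_ric (2 * k - CARD('r) + l) A"
    and ric1: "lower_ric (2 * k - CARD('r) + l) A < 1"
    and genpos: "rows_general_position CARD('r) X"
    and Icard: "card I \<le> min (2 * (k - CARD('r)) + l) k"
    and Ioff: "card (I - row_supp X) \<le> k - CARD('r) + l"
    and Ion: "card (I \<inter> row_supp X) = k - CARD('r) + q"
  shows "rank_concat A I B = card I + CARD('r) - q"
proof -
  define S where "S = row_supp X"
  define r where "r = CARD('r)"
  define E where "E = (\<lambda>i. axis i (1::real) :: real^'n) ` I"
  define U where "U = {x::real^'n. \<forall>i. i \<notin> I \<longrightarrow> x$i = 0}"
  define W where "W = span (columns X)"
  define G where "G = E \<union> columns X"
  have injB: "inj ((*v) B)" using Brank full_rank_injective by blast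
  have injX: "inj ((*v) X)"
  proof (rule injI)
    fix x y assume "X *v x = X *v y"
    then have "B *v x = B *v y" by (simp add: BAX matrix_vector_mul_assoc[symmetric])
    then show "x = y" using injB by (simp add: inj_eq)
  qed
  have rankX: "rank X = r" using injX full_rank_injective r_def by blast
  have dimW: "dim W = r" using rankX by (simp add: W_def column_rank_def)
  have subU: "subspace U" unfolding U_def subspace_def by auto
  have spanE: "span E = U"
  proof
    show "span E \<subseteq> U"
      by (rule span_minimal[OF _ subU]) (auto simp: E_def U_def axis_def)
    show "U \<subseteq> span E"
    proof
      fix x assume x: "x \<in> U"
      have "x = (\<Sum>i\<in>UNIV. x $ i *s axis i 1)"
        by (rule basis_expansion[symmetric])
      also have "\<dots> = (\<Sum>i\<in>I. (x $ i) *s axis i 1)"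
        by (rule sum.mono_neutral_cong_right) (use x in \<open>auto simp: U_def\<close>)
      also have "\<dots> \<in> span E"
        unfolding scalar_mult_eq_scaleR
        by (intro span_sum span_mul span_base) (auto simp: E_def)
      finally show "x \<in> span E" .
    qed
  qed
  have dimU: "dim U = card I"
    using dim_substandard_cart[of I, where 'a=real] unfolding U_def dim_vec_eq .
  have subR: "subspace (range ((*v) X))"
    unfolding subspace_def
  proof (intro conjI ballI allI)
    show "0 \<in> range ((*v) X)" by (metis matrix_vector_mult_0_right rangeI)
  next
    fix a b assume "a \<in> range ((*v) X)" "b \<in> range ((*v) X)"
    then obtain u v where "a = X *v u" "b = X *v v" by auto
    then have "a + b = X *v (u + v)" by (simp add: matrix_vector_right_distrib)
    then show "a + b \<in> range ((*v) X)" by blast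
  next
    fix c :: real and a assume "a \<in> range ((*v) X)"
    then obtain u where "a = X *v u" by auto
    then have "c *\<^sub>R a = X *v (c *\<^sub>R u)"
      by (simp add: vec_eq_iff matrix_vector_mult_def sum_distrib_left algebra_simps)
    then show "c *\<^sub>R a \<in> range ((*v) X)" by blast
  qed
  have Wrange: "W \<subseteq> range ((*v) X)"
    unfolding W_def
    by (rule span_minimal[OF _ subR]) (auto simp: columns_def matrix_vector_mult_basis[symmetric])
  have rowz: "row i X = 0" if "i \<notin> S" for i
    using that by (simp add: S_def row_supp_def)
  have comp: "(X *v z) $ i = row i X \<bullet> z" for z i
    by (simp add: matrix_vector_mul_component row_def)
  \<comment> \<open>the intersection\<close>
  define R where "R = (\<lambda>i. row i X) ` (S - I)"
  define N where "N = {y::real^'r. \<forall>x\<in>span R. orthogonal x y}"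
  have finS: "finite S" by simp
  have qr: "card (S - I) = r - q" and qle: "q \<le> r"
  proof -
    have "card (S - I) = card S - card (I \<inter> S)"
      using card_Diff_subset_Int[of S I] by (simp add: Diff_Int2 Int_commute)
    moreover have "card (I \<inter> S) \<le> card S" by (rule card_mono) auto
    ultimately show "card (S - I) = r - q" "q \<le> r"
      using Ion suppX rk by (auto simp: S_def r_def)
  qed
  obtain T where T: "S - I \<subseteq> T" "T \<subseteq> S" "card T = r"
    using exists_subset_between[of "S - I" r S] qr rk suppX by (auto simp: S_def r_def)
  have "inj_on (\<lambda>i. row i X) T \<and> independent ((\<lambda>i. row i X) ` T)"
    using genpos T unfolding rows_general_position_def by (auto simp: S_def r_def)
  then have indR: "independent R" and injR: "inj_on (\<lambda>i. row i X) (S - I)"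
    using T(1) unfolding R_def by (meson image_mono independent_mono inj_on_subset)+
  have dimR: "dim (span R) = r - q"
    using dim_eq_card_independent[OF indR] card_image[OF injR] qr R_def by simp
  have "dim {y \<in> UNIV. \<forall>x \<in> span R. orthogonal x y} + dim (span R) = dim (UNIV :: (real^'r) set)"
    by (rule dim_subspace_orthogonal_to_vectors) auto
  then have dimN: "dim N = q"
    using dimR qle dim_UNIV[where 'a="real^'r"] by (simp add: N_def r_def)
  have UW: "U \<inter> W = (*v) X ` N"
  proof
    show "U \<inter> W \<subseteq> (*v) X ` N"
    proof
      fix x assume x: "x \<in> U \<inter> W"
      then obtain z where z: "x = X *v z" using Wrange by auto
      have "orthogonal z a" if "a \<in> span R" for a
      proof (rule orthogonal_to_span[OF that])
        fix y assume "y \<in> R"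
        then obtain i where "i \<in> S - I" "y = row i X" by (auto simp: R_def)
        then show "orthogonal z y" using x z comp[of z i]
          by (auto simp: U_def orthogonal_def inner_commute)
      qed
      then have "z \<in> N" by (auto simp: N_def orthogonal_commute)
      then show "x \<in> (*v) X ` N" using z by auto
    qed
    show "(*v) X ` N \<subseteq> U \<inter> W"
    proof
      fix x assume "x \<in> (*v) X ` N"
      then obtain z where z: "z \<in> N" "x = X *v z" by auto
      have "x $ i = 0" if "i \<notin> I" for i
      proof (cases "i \<in> S")
        case True
        then have "row i X \<in> span R" using that by (auto simp: R_def intro: span_base)
        then show ?thesis using z comp[of z i] by (auto simp: N_def orthogonal_def)
      next
        case False then show ?thesis using z comp[of z i] rowz by auto
      qed
      moreover have "x \<in> W" using z W_def matrix_vector_mult_in_columnspace by simp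
      ultimately show "x \<in> U \<inter> W" by (auto simp: U_def)
    qed
  qed
  have subN: "subspace N" unfolding N_def subspace_def orthogonal_def
    by (auto simp: inner_add_right)
  have dimUW: "dim (U \<inter> W) = q"
    using UW dim_image_eq[OF matrix_vector_mul_linear, of X N] injX dimN
    by (simp add: inj_on_subset)
  have sumdim: "dim {x + y |x y. x \<in> U \<and> y \<in> W} + dim (U \<inter> W) = dim U + dim W"
    by (rule dim_sums_Int) (auto simp: subU W_def)
  have spanG: "span G = {x + y |x y. x \<in> U \<and> y \<in> W}"
    unfolding G_def span_Un spanE W_def by simp
  have dimG: "dim G = card I + r - q"
    using sumdim dimUW dimU dimW spanG dim_span[of G] by simp
  \<comment> \<open>injectivity of A\<close>
  define Z where "Z = {x::real^'n. \<forall>i. i \<notin> I \<union> S \<longrightarrow> x$i = 0}"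
  have subZ: "subspace Z" unfolding Z_def subspace_def by auto
  have GZ: "span G \<subseteq> Z"
  proof (rule span_minimal[OF _ subZ])
    show "G \<subseteq> Z"
    proof
      fix g assume "g \<in> G"
      then have "g \<in> E \<or> g \<in> columns X" by (simp add: G_def)
      then show "g \<in> Z"
      proof (elim disjE)
        assume "g \<in> E" then show ?thesis by (auto simp: E_def Z_def axis_def)
      next
        assume "g \<in> columns X"
        then obtain j where "g = X *v axis j 1"
          by (auto simp: columns_def matrix_vector_mult_basis)
        then show ?thesis using comp rowz by (auto simp: Z_def)
      qed
    qed
  qed
  have cardIS: "card (I \<union> S) \<le> 2 * k - r + l"
  proof -
    have "card (I \<union> S) = card (I - S) + card S"
    proof -
      have "(I - S) \<inter> S = {}" by blast
      then have "card ((I - S) \<union> S) = card (I - S) + card S"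
        by (intro card_Un_disjoint) auto
      moreover have "(I - S) \<union> S = I \<union> S" by blast
      ultimately show ?thesis by simp
    qed
    then show ?thesis using Ioff suppX rk by (simp add: S_def r_def)
  qed
  have injA: "inj_on ((*v) A) (span G)"
  proof (rule inj_onI)
    fix x y assume xy: "x \<in> span G" "y \<in> span G" "A *v x = A *v y"
    have "x - y \<in> Z" using xy GZ subZ subspace_diff by blast
    then have "{i. (x - y) $ i \<noteq> 0} \<subseteq> I \<union> S" by (auto simp: Z_def)
    then have "card {i. (x - y) $ i \<noteq> 0} \<le> 2 * k - r + l"
      using cardIS card_mono[of "I \<union> S"] by (meson finite le_trans)
    moreover have "A *v (x - y) = 0" using xy by (simp add: matrix_vector_mult_diff_distrib)
    ultimately have "x - y = 0" using ric_injective[OF ric1[folded r_def]] by blast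
    then show "x = y" by simp
  qed
  have cols: "(\<lambda>i. column i A) ` I \<union> columns B = (*v) A ` G"
  proof -
    have "(\<lambda>i. column i A) ` I = (*v) A ` E"
      by (simp add: E_def image_image matrix_vector_mult_basis)
    moreover have "columns B = (*v) A ` columns X"
      by (auto simp: columns_image_basis BAX matrix_vector_mul_assoc[symmetric] image_image)
    ultimately show ?thesis by (simp add: G_def image_Un)
  qed
  have "rank_concat A I B = dim G"
    unfolding rank_concat_def cols
    by (rule dim_image_eq[OF matrix_vector_mul_linear injA])
  then show ?thesis using dimG r_def by simp
qed

end
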